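(* Let $X$ be a discrete metric space. There exists an approximate unit for the ideal $C_0(X\times X;\Delta)\subseteq \ell^\infty(X\times X)$ consisting of positive definite functions if and only if there exists a metrically proper function of negative type on $X\times X$.
   Context: Let $(X,d)$ be a metric space with the discrete topology. A function $f:X\times X\to\mathbb{C}$ is positive definite if for every $n\ge1$, all $x_1,\dots,x_n\in X$ and all $z_1,\dots,z_n\in\mathbb{C}$ one has $\sum_{i,j}\overline{z_i}\,f(x_i,x_j)\,z_j\ge 0$. A function $h:X\times X\to\mathbb{R}$ is of negative type if (a) $h(x,x)=0$ for all $x$; (b) $h(x,y)=h(y,x)$ for all $x,y$; (c) $\sum_{i,j}a_i h(x_i,x_j)a_j\le 0$ for all $n$, all $x_1,\dots,x_n\in X$ and all $a_1,\dots,a_n\in\mathbb{R}$ with $\sum_j a_j=0$. A function $f:X\times X\to\mathbb{C}$ is metrically proper if (a) for every $R>0$, $\sup\{|f(x,y)|: d(x,y)\le R\}<\infty$, and (b) for every $C>0$ there is $R>0$ such that $|f(x,y)|>C$ whenever $d(x,y)>R$. Let $\Delta$ be the diagonal of $X\times X$ and $C_0(X\times X;\Delta)$ the set of bounded functions $f$ on $X\times X$ such that for every $\epsilon>0$ there is $R>0$ with $|f(x,y)|<\epsilon$ whenever $d(x,y)>R$; it is an ideal in the $C^*$-algebra $\ell^\infty(X\times X)$ (sup norm). An approximate unit for $C_0(X\times X;\Delta)$ is a net $(u_\lambda)$ of elements of $C_0(X\times X;\Delta)$ such that $\|u_\lambda f-f\|_\infty\to0$ for every $f\in C_0(X\times X;\Delta)$;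 equivalently (for bounded nets), $u_\lambda\to1$ uniformly on each set $B_\Delta(R)=\{(x,y):d(x,y)<R\}$. *)

theory Defs
  imports "HOL-Analysis.Analysis"
begin

definition pos_def_kernel :: "('a \<Rightarrow> 'a \<Rightarrow> complex) \<Rightarrow> bool" where
  "pos_def_kernel f \<longleftrightarrow>
     (\<forall>n::nat. \<forall>x::nat \<Rightarrow> 'a. \<forall>z::nat \<Rightarrow> complex. n \<ge> 1 \<longrightarrow>
        (let s = (\<Sum>i<n. \<Sum>j<n. cnj (z i) * f (x i) (x j) * z j)
         in Im s = 0 \<and> Re s \<ge> 0))"

definition negative_type :: "('a \<Rightarrow> 'a \<Rightarrow> real) \<Rightarrow> bool" where
  "negative_type h \<longleftrightarrow>
     (\<forall>x. h x x = 0) \<and> (\<forall>x y. h x y = h y x) \<and>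
     (\<forall>n::nat. \<forall>x::nat \<Rightarrow> 'a. \<forall>a::nat \<Rightarrow> real. n \<ge> 1 \<longrightarrow> (\<Sum>j<n. a j) = 0 \<longrightarrow>
        (\<Sum>i<n. \<Sum>j<n. a i * h (x i) (x j) * a j) \<le> 0)"

definition metrically_proper :: "('a \<Rightarrow> 'a \<Rightarrow> real) \<Rightarrow> ('a \<Rightarrow> 'a \<Rightarrow> 'b::real_normed_vector) \<Rightarrow> bool" where
  "metrically_proper d f \<longleftrightarrow>
     (\<forall>R>0. \<exists>B. \<forall>x y. d x y \<le> R \<longrightarrow> norm (f x y) \<le> B) \<and>
     (\<forall>C>0. \<exists>R>0. \<forall>x y. d x y > R \<longrightarrow> norm (f x y) > C)"

definition C0_diag :: "('a \<Rightarrow> 'a \<Rightarrow> real) \<Rightarrow> ('a \<Rightarrow> 'a \<Rightarrow> complex) set" where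
  "C0_diag d = {f. (\<exists>B. \<forall>x y. norm (f x y) \<le> B) \<and>
     (\<forall>\<epsilon>>0. \<exists>R>0. \<forall>x y. d x y > R \<longrightarrow> norm (f x y) < \<epsilon>)}"

definition sup_norm :: "('a \<Rightarrow> 'a \<Rightarrow> complex) \<Rightarrow> real" where
  "sup_norm f = (SUP p\<in>UNIV. norm (f (fst p) (snd p)))"

text \<open>A net (u_lambda) is represented by the proper filter F it generates on the function space
  (the image of the tail filter of the directed index set); conversely every proper filter
  arises from a net in this way.\<close>
definition pd_approx_unit :: "('a \<Rightarrow> 'a \<Rightarrow> real) \<Rightarrow> ('a \<Rightarrow> 'a \<Rightarrow> complex) filter \<Rightarrow> bool" where
  "pd_approx_unit d F \<longleftrightarrow> F \<noteq> bot \<and>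
     (\<forall>\<^sub>F u in F. u \<in> C0_diag d \<and> pos_def_kernel u) \<and>
     (\<forall>f \<in> C0_diag d. ((\<lambda>u. sup_norm (\<lambda>x y. u x y * f x y - f x y)) \<longlongrightarrow> 0) F)"

end

theory Submission
  imports Defs
begin

definition psd :: "nat \<Rightarrow> (nat \<Rightarrow> nat \<Rightarrow> real) \<Rightarrow> bool" where
  "psd n M \<longleftrightarrow> (\<forall>i<n. \<forall>j<n. M i j = M j i) \<and>
     (\<forall>a. 0 \<le> (\<Sum>i<n. \<Sum>j<n. a i * M i j * a j))"

lemma mult_sum_aux: "(x::real) * (\<Sum>k\<in>K. f k * g k) * y = (\<Sum>k\<in>K. x * f k * (y * g k))"
proof -
  have "(x::real) * (\<Sum>k\<in>K. f k * g k) * y = (\<Sum>k\<in>K. x * (f k * g k) * y)"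
    by (simp add: sum_distrib_left sum_distrib_right)
  also have "\<dots> = (\<Sum>k\<in>K. x * f k * (y * g k))"
    by (rule sum.cong) (auto simp: mult_ac)
  finally show ?thesis .
qed

lemma psd_Q: "psd n M \<Longrightarrow> 0 \<le> (\<Sum>i<n. \<Sum>j<n. a i * M i j * a j)"
  unfolding psd_def by blast

lemma psd_sym: "psd n M \<Longrightarrow> i < n \<Longrightarrow> j < n \<Longrightarrow> M i j = M j i"
  unfolding psd_def by blast

lemma gram_form:
  fixes a :: "nat \<Rightarrow> real"
  shows "(\<Sum>i<n. \<Sum>j<n. a i * (\<Sum>k<m. V k i * V k j) * a j) =
   (\<Sum>k<m. (\<Sum>i<n. a i * V k i) * (\<Sum>i<n. a i * V k i))"
proof -
  have "(\<Sum>i<n. \<Sum>j<n. a i * (\<Sum>k<m. V k i * V k j) * a j) =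
        (\<Sum>i<n. \<Sum>j<n. \<Sum>k<m. a i * (V k i * V k j) * a j)"
    by (simp add: sum_distrib_left sum_distrib_right)
  also have "\<dots> = (\<Sum>i<n. \<Sum>k<m. \<Sum>j<n. a i * (V k i * V k j) * a j)"
    by (rule sum.cong[OF refl], rule sum.swap)
  also have "\<dots> = (\<Sum>k<m. \<Sum>i<n. \<Sum>j<n. a i * (V k i * V k j) * a j)"
    by (rule sum.swap)
  also have "\<dots> = (\<Sum>k<m. (\<Sum>i<n. a i * V k i) * (\<Sum>i<n. a i * V k i))"
    by (simp add: sum_product mult_ac)
  finally show ?thesis .
qed

lemma gram_psd: "psd n (\<lambda>i j. \<Sum>k<m. V k i * V k j)"
  unfolding psd_def gram_form by (auto simp: mult.commute intro: sum_nonneg)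

lemma ifmul1: "(if P then 1 else 0) * (x::real) = (if P then x else 0)" by simp
lemma ifmul2: "(x::real) * (if P then 1 else 0) = (if P then x else 0)" by simp
lemma sum_if_const: "(\<Sum>l\<in>A. if P then f l else 0) = (if P then \<Sum>l\<in>A. f l else 0)"
  by simp

lemma psd_diag: assumes "psd n M" "i < n" shows "0 \<le> M i i"
proof -
  have "0 \<le> (\<Sum>k<n. \<Sum>j<n. (if k = i then 1 else 0) * M k j * (if j = i then 1 else 0))"
    by (rule psd_Q[OF assms(1)])
  also have "\<dots> = M i i" using assms(2) by (simp only: ifmul1 ifmul2 sum_if_const) simp
  finally show ?thesis .
qed

lemma psd_restrict: assumes "psd (Suc n) M" shows "psd n M"
  unfolding psd_def
proof safe
  fix i j assume "i < n" "j < n" then show "M i j = M j i" using psd_sym[OF assms] by auto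
next
  fix a
  have "0 \<le> (\<Sum>i<Suc n. \<Sum>j<Suc n. (if i < n then a i else 0) * M i j * (if j < n then a j else 0))"
    by (rule psd_Q[OF assms])
  also have "\<dots> = (\<Sum>i<n. \<Sum>j<n. a i * M i j * a j)"
    by simp
  finally show "0 \<le> (\<Sum>i<n. \<Sum>j<n. a i * M i j * a j)" .
qed

lemma form2:
  fixes M :: "nat \<Rightarrow> nat \<Rightarrow> real"
  assumes "finite A" "i \<in> A" "j \<in> A" "i \<noteq> j"
  shows "(\<Sum>k\<in>A. \<Sum>l\<in>A. (if k = i then s else if k = j then t else 0) * M k l *
            (if l = i then s else if l = j then t else 0)) =
         s * s * M i i + s * t * M i j + t * s * M j i + t * t * M j j"
proof -
  have e: "\<And>k. (if k = i then s else if k = j then t else 0) = (if k = i then s else 0) + (if k = j then t else 0)"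
    using assms(4) by auto
  show ?thesis unfolding e
    using assms by (simp add: algebra_simps sum.distrib if_distrib[where f="\<lambda>x. x * _"] if_distrib[where f="\<lambda>x. _ * x"] sum_if_const cong: if_cong)
qed

lemma quad_zero:
  fixes A B :: real
  assumes "A \<ge> 0" "\<And>c. 0 \<le> c * c * A + 2 * c * B"
  shows "B = 0"
proof -
  define c where "c = - B / (A + 1)"
  have "0 \<le> c * c * A + 2 * c * B" by (rule assms(2))
  also have "c * c * A + 2 * c * B = - (B * B * (A + 2)) / ((A + 1) * (A + 1))"
    proof -
    have "A + 1 \<noteq> 0" using assms(1) by linarith
    then show ?thesis unfolding c_def by (simp add: divide_simps) (simp add: algebra_simps)
  qed
  finally have "0 \<le> - (B * B * (A + 2)) / ((A + 1) * (A + 1))" .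
  moreover have "(A + 1) * (A + 1) > 0" using assms(1) by (simp add: add_pos_nonneg)
  ultimately have "B * B * (A + 2) \<le> 0"
    by (simp add: divide_le_0_iff)
  moreover have "B * B * (A + 2) \<ge> 0" using assms(1) by simp
  ultimately have "B * B * (A + 2) = 0" by linarith
  then show ?thesis using assms(1) by simp
qed

lemma psd_last_zero:
  assumes "psd (Suc n) M" "M n n = 0" "i < n"
  shows "M i n = 0"
proof (rule quad_zero)
  show "0 \<le> M i i" using psd_diag[OF assms(1)] assms(3) by simp
  fix c
  have "0 \<le> (\<Sum>k<Suc n. \<Sum>l<Suc n. (if k = i then c else if k = n then 1 else 0) * M k l *
            (if l = i then c else if l = n then 1 else 0))"
    by (rule psd_Q[OF assms(1)])
  also have "\<dots> = c * c * M i i + c * 1 * M i n + 1 * c * M n i + 1 * 1 * M n n"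
    by (rule form2) (use assms(3) in auto)
  also have "\<dots> = c * c * M i i + 2 * c * M i n"
    using assms psd_sym[OF assms(1), of i n] by simp
  finally show "0 \<le> c * c * M i i + 2 * c * M i n" .
qed

lemma schur_compl:
  assumes "psd (Suc n) M" "M n n > 0"
  shows "psd n (\<lambda>i j. M i j - M i n * M n j / M n n)"
  unfolding psd_def
proof safe
  have sym: "\<And>i j. i < Suc n \<Longrightarrow> j < Suc n \<Longrightarrow> M i j = M j i" using psd_sym[OF assms(1)] by blast
  fix i j assume "i < n" "j < n"
  then show "M i j - M i n * M n j / M n n = M j i - M j n * M n i / M n n"
    using sym[of i j] sym[of i n] sym[of j n] by simp
next
  have sym: "\<And>i j. i < Suc n \<Longrightarrow> j < Suc n \<Longrightarrow> M i j = M j i" using psd_sym[OF assms(1)] by blast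
  fix a
  define p where "p = M n n"
  define L where "L = (\<Sum>j<n. M n j * a j)"
  have L2: "(\<Sum>i<n. a i * M i n) = L" unfolding L_def
    by (rule sum.cong) (auto simp: sym[of _ n] mult.commute)
  define b where "b = (\<lambda>k. if k < n then a k else - L / p)"
  have "0 \<le> (\<Sum>i<Suc n. \<Sum>j<Suc n. b i * M i j * b j)"
    by (rule psd_Q[OF assms(1)])
  also have "\<dots> = (\<Sum>i<n. \<Sum>j<n. a i * M i j * a j) + (\<Sum>i<n. a i * M i n) * (- L / p)
      + (- L / p) * (\<Sum>j<n. M n j * a j) + (- L / p) * p * (- L / p)"
    by (simp add: b_def p_def sum.distrib sum_distrib_left sum_distrib_right mult_ac sum_subtractf sum_negf)
  also have "\<dots> = (\<Sum>i<n. \<Sum>j<n. a i * M i j * a j) - L * L / p"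
    unfolding L2 L_def[symmetric] using assms(2) by (simp add: p_def field_simps)
  also have "\<dots> = (\<Sum>i<n. \<Sum>j<n. a i * (M i j - M i n * M n j / M n n) * a j)"
  proof -
    have "(\<Sum>i<n. \<Sum>j<n. a i * (M i j - M i n * M n j / M n n) * a j) =
          (\<Sum>i<n. \<Sum>j<n. a i * M i j * a j) - (\<Sum>i<n. \<Sum>j<n. (a i * M i n) * (M n j * a j) / p)"
      by (simp add: p_def algebra_simps sum_subtractf)
    also have "(\<Sum>i<n. \<Sum>j<n. (a i * M i n) * (M n j * a j) / p) =
        (\<Sum>i<n. a i * M i n) * (\<Sum>j<n. M n j * a j) / p"
      by (simp add: sum_divide_distrib sum_product)
    also have "\<dots> = L * L / p" unfolding L2 L_def ..
    finally show ?thesis by simp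
  qed
  finally show "0 \<le> (\<Sum>i<n. \<Sum>j<n. a i * (M i j - M i n * M n j / M n n) * a j)" .
qed

lemma psd_decomp:
  "psd n M \<Longrightarrow> \<exists>(m::nat) (V::nat \<Rightarrow> nat \<Rightarrow> real). \<forall>i<n. \<forall>j<n. M i j = (\<Sum>k<m. V k i * V k j)"
proof (induction n arbitrary: M)
  case 0
  then show ?case by auto
next
  case (Suc n)
  have sym: "\<And>i j. i < Suc n \<Longrightarrow> j < Suc n \<Longrightarrow> M i j = M j i"
    using psd_sym[OF Suc.prems] by blast
  have p0: "M n n \<ge> 0" using psd_diag[OF Suc.prems] by simp
  show ?case
  proof (cases "M n n = 0")
    case True
    have z: "\<And>i. i < n \<Longrightarrow> M i n = 0" using psd_last_zero[OF Suc.prems True] .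
    obtain m :: nat and V :: "nat \<Rightarrow> nat \<Rightarrow> real" where V: "\<forall>i<n. \<forall>j<n. M i j = (\<Sum>k<m. V k i * V k j)"
      using Suc.IH[OF psd_restrict[OF Suc.prems]] by blast
    define W where "W = (\<lambda>k i. if i < n then V k i else 0)"
    have "\<forall>i<Suc n. \<forall>j<Suc n. M i j = (\<Sum>k<m. W k i * W k j)"
    proof (intro allI impI)
      fix i j assume ij: "i < Suc n" "j < Suc n"
      show "M i j = (\<Sum>k<m. W k i * W k j)"
      proof (cases "i < n \<and> j < n")
        case True then show ?thesis using V by (simp add: W_def)
      next
        case False
        have "M i j = 0"
        proof (cases "i = n")
          case True
          show ?thesis
          proof (cases "j = n")
            case True
            then show ?thesis using \<open>i = n\<close> \<open>M n n = 0\<close> by simp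
          next
            case False
            then have "j < n" using ij by simp
            then show ?thesis using \<open>i = n\<close> z[of j] sym[of j n] by simp
          qed
        next
          case False
          then have "i < n" "j = n" using ij \<open>\<not> (i < n \<and> j < n)\<close> by auto
          then show ?thesis using z[of i] by simp
        qed
        then show ?thesis using False by (auto simp: W_def)
      qed
    qed
    then show ?thesis by blast
  next
    case False
    then have pp: "M n n > 0" using p0 by simp
    define p where "p = M n n"
    obtain m :: nat and V :: "nat \<Rightarrow> nat \<Rightarrow> real" where V: "\<forall>i<n. \<forall>j<n. M i j - M i n * M n j / M n n = (\<Sum>k<m. V k i * V k j)"
      using Suc.IH[OF schur_compl[OF Suc.prems pp]] by blast
    define W where "W = (\<lambda>k i. if k < m then (if i < n then V k i else 0) else M i n / sqrt p)"
    have ppos: "p > 0" using pp p_def by simp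
    have sq: "\<And>x y. (x / sqrt p) * (y / sqrt p) = x * y / p"
    proof -
      fix x y show "(x / sqrt p) * (y / sqrt p) = x * y / p"
        using ppos by (simp add: field_simps abs_of_pos)
    qed
    have "\<forall>i<Suc n. \<forall>j<Suc n. M i j = (\<Sum>k<Suc m. W k i * W k j)"
    proof (intro allI impI)
      fix i j assume ij: "i < Suc n" "j < Suc n"
      have e: "(\<Sum>k<Suc m. W k i * W k j) = (\<Sum>k<m. (if i < n then V k i else 0) * (if j < n then V k j else 0))
               + M i n * M j n / p"
        using ppos by (simp add: W_def abs_of_pos)
      show "M i j = (\<Sum>k<Suc m. W k i * W k j)"
      proof (cases "i < n")
        case True
        show ?thesis
        proof (cases "j < n")
          case True
          then show ?thesis using V[rule_format, of i j] \<open>i < n\<close> e sym[of n j] ij unfolding p_def by auto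
        next
          case False
          then have "j = n" using ij by simp
          then show ?thesis using e \<open>i < n\<close> pp unfolding p_def by simp
        qed
      next
        case False
        then have "i = n" using ij by simp
        show ?thesis
        proof (cases "j < n")
          case True
          then show ?thesis using e \<open>i = n\<close> pp sym[of n j] ij unfolding p_def by simp
        next
          case False
          then have "j = n" using ij by simp
          then show ?thesis using e \<open>i = n\<close> pp unfolding p_def by simp
        qed
      qed
    qed
    then show ?thesis by blast
  qed
qed

lemma schur_product:
  assumes "psd n A" "psd n B"
  shows "psd n (\<lambda>i j. A i j * B i j)"
proof -
  obtain m :: nat and V :: "nat \<Rightarrow> nat \<Rightarrow> real" where V: "\<forall>i<n. \<forall>j<n. A i j = (\<Sum>k<m. V k i * V k j)"
    using psd_decomp[OF assms(1)] by blast
  show ?thesis unfolding psd_def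
  proof safe
    fix i j assume "i < n" "j < n"
    then show "A i j * B i j = A j i * B j i" using psd_sym[OF assms(1)] psd_sym[OF assms(2)] by simp
  next
    fix a
    have "(\<Sum>i<n. \<Sum>j<n. a i * (A i j * B i j) * a j) =
          (\<Sum>i<n. \<Sum>j<n. \<Sum>k<m. (a i * V k i) * B i j * (a j * V k j))"
      using V by (intro sum.cong refl) (simp add: sum_distrib_left sum_distrib_right mult_ac)
    also have "\<dots> = (\<Sum>i<n. \<Sum>k<m. \<Sum>j<n. (a i * V k i) * B i j * (a j * V k j))"
      by (rule sum.cong[OF refl], rule sum.swap)
    also have "\<dots> = (\<Sum>k<m. \<Sum>i<n. \<Sum>j<n. (a i * V k i) * B i j * (a j * V k j))"
      by (rule sum.swap)
    also have "\<dots> \<ge> 0"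
      by (intro sum_nonneg psd_Q[OF assms(2)])
    finally show "0 \<le> (\<Sum>i<n. \<Sum>j<n. a i * (A i j * B i j) * a j)" by simp
  qed
qed

lemma psd_ones: "psd n (\<lambda>i j. 1)"
proof -
  have "psd n (\<lambda>i j. \<Sum>k<Suc 0. (\<lambda>k i. 1::real) k i * (\<lambda>k i. 1) k j)" by (rule gram_psd)
  then show ?thesis by simp
qed

lemma psd_pow: "psd n A \<Longrightarrow> psd n (\<lambda>i j. A i j ^ m)"
proof (induction m)
  case 0 then show ?case using psd_ones by simp
next
  case (Suc m)
  then show ?case using schur_product[OF Suc.prems Suc.IH[OF Suc.prems]] by simp
qed

lemma psd_exp:
  assumes "psd n A"
  shows "psd n (\<lambda>i j. exp (A i j))"
  unfolding psd_def
proof (intro conjI allI impI)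
  fix i j assume "i < n" "j < n" then show "exp (A i j) = exp (A j i)" using psd_sym[OF assms] by simp
next
  fix a
  have s: "(\<lambda>m. \<Sum>i<n. \<Sum>j<n. a i * (A i j ^ m /\<^sub>R fact m) * a j) sums
           (\<Sum>i<n. \<Sum>j<n. a i * exp (A i j) * a j)"
    by (intro sums_sum sums_mult sums_mult2 exp_converges)
  have t: "0 \<le> (\<Sum>i<n. \<Sum>j<n. a i * (A i j ^ m /\<^sub>R fact m) * a j)" for m
  proof -
    have "(\<Sum>i<n. \<Sum>j<n. a i * (A i j ^ m /\<^sub>R fact m) * a j) =
          (\<Sum>i<n. \<Sum>j<n. a i * (A i j ^ m) * a j) / fact m"
      by (simp add: divide_inverse sum_distrib_left mult_ac)
    also have "\<dots> \<ge> 0"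
      by (intro divide_nonneg_pos psd_Q[OF psd_pow[OF assms]]) simp
    finally show ?thesis .
  qed
  show "0 \<le> (\<Sum>i<n. \<Sum>j<n. a i * exp (A i j) * a j)"
    by (rule sums_le[OF t sums_zero s])
qed

lemma psd_scale:
  assumes "psd n A"
  shows "psd n (\<lambda>i j. g i * A i j * g j)"
  unfolding psd_def
proof safe
  fix i j assume "i < n" "j < n" then show "g i * A i j * g j = g j * A j i * g i" using psd_sym[OF assms] by simp
next
  fix a
  have "0 \<le> (\<Sum>i<n. \<Sum>j<n. (a i * g i) * A i j * (a j * g j))" by (rule psd_Q[OF assms])
  then show "0 \<le> (\<Sum>i<n. \<Sum>j<n. a i * (g i * A i j * g j) * a j)" by (simp add: mult_ac)
qed

lemma psd_cmult:
  assumes "psd n A" "c \<ge> 0"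
  shows "psd n (\<lambda>i j. c * A i j)"
  unfolding psd_def
proof safe
  fix i j assume "i < n" "j < n" then show "c * A i j = c * A j i" using psd_sym[OF assms(1)] by simp
next
  fix a
  have "0 \<le> c * (\<Sum>i<n. \<Sum>j<n. a i * A i j * a j)" using psd_Q[OF assms(1)] assms(2) by simp
  then show "0 \<le> (\<Sum>i<n. \<Sum>j<n. a i * (c * A i j) * a j)" by (simp add: sum_distrib_left mult_ac)
qed

lemma negtypeD:
  fixes h :: "'a \<Rightarrow> 'a \<Rightarrow> real" and a :: "nat \<Rightarrow> real" and x :: "nat \<Rightarrow> 'a"
  assumes "negative_type h" "n \<ge> 1" "(\<Sum>j<n. a j) = 0"
  shows "(\<Sum>i<n. \<Sum>j<n. a i * h (x i) (x j) * a j) \<le> (0::real)"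
proof -
  have "\<forall>n::nat. \<forall>x::nat \<Rightarrow> 'a. \<forall>a::nat \<Rightarrow> real. n \<ge> 1 \<longrightarrow> (\<Sum>j<n. a j) = 0 \<longrightarrow>
        (\<Sum>i<n. \<Sum>j<n. a i * h (x i) (x j) * a j) \<le> 0"
    using assms(1) unfolding negative_type_def by (elim conjE)
  then show ?thesis using assms(2,3) by blast
qed

lemma neg_psd:
  fixes h :: "'a \<Rightarrow> 'a \<Rightarrow> real"
  assumes "negative_type h"
  shows "psd n (\<lambda>i j. h (x i) x0 + h (x j) x0 - h (x i) (x j))"
  unfolding psd_def
proof safe
  have hs: "\<And>u v. h u v = h v u" and h0: "\<And>u. h u u = 0" using assms unfolding negative_type_def by auto
  fix i j show "h (x i) x0 + h (x j) x0 - h (x i) (x j) = h (x j) x0 + h (x i) x0 - h (x j) (x i)"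
    using hs by simp
next
  have hs: "\<And>u v. h u v = h v u" and h0: "\<And>u. h u u = 0" using assms unfolding negative_type_def by auto
  fix a :: "nat \<Rightarrow> real"
  define S where "S = (\<Sum>i<n. a i)"
  define T where "T = (\<Sum>i<n. a i * h (x i) x0)"
  define H where "H = (\<Sum>i<n. \<Sum>j<n. a i * h (x i) (x j) * a j)"
  define y where "y = (\<lambda>k. if k < n then x k else x0)"
  define b where "b = (\<lambda>k. if k < n then a k else - S)"
  have "(\<Sum>i<Suc n. \<Sum>j<Suc n. b i * h (y i) (y j) * b j) \<le> 0"
    by (rule negtypeD[OF assms]) (simp_all add: b_def S_def)
  also have "(\<Sum>i<Suc n. \<Sum>j<Suc n. b i * h (y i) (y j) * b j) =
      H + (\<Sum>i<n. a i * h (x i) x0) * (- S) + (- S) * (\<Sum>j<n. h x0 (x j) * a j) + S * S * h x0 x0"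
    by (simp add: b_def y_def H_def sum.distrib sum_distrib_left sum_distrib_right mult_ac sum_subtractf sum_negf)
  also have "\<dots> = H - 2 * S * T"
    unfolding T_def using h0 hs by (simp add: mult_ac)
  finally have 1: "H - 2 * S * T \<le> 0" .
  have "(\<Sum>i<n. \<Sum>j<n. a i * (h (x i) x0 + h (x j) x0 - h (x i) (x j)) * a j) =
        (\<Sum>i<n. \<Sum>j<n. (a i * h (x i) x0) * a j) + (\<Sum>i<n. \<Sum>j<n. a i * (h (x j) x0 * a j)) - H"
    unfolding H_def by (simp add: algebra_simps sum.distrib sum_subtractf)
  also have "\<dots> = T * S + S * T - H"
  proof -
    have e1: "T * S = (\<Sum>i<n. \<Sum>j<n. (a i * h (x i) x0) * a j)"
      unfolding T_def S_def sum_product ..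
    have TT: "T = (\<Sum>j<n. h (x j) x0 * a j)" unfolding T_def by (simp add: mult.commute)
    have e2: "S * T = (\<Sum>i<n. \<Sum>j<n. a i * (h (x j) x0 * a j))"
      unfolding S_def TT sum_product ..
    show ?thesis using e1 e2 by simp
  qed
  finally show "0 \<le> (\<Sum>i<n. \<Sum>j<n. a i * (h (x i) x0 + h (x j) x0 - h (x i) (x j)) * a j)"
    using 1 by simp
qed

lemma pd_of_psd:
  fixes k :: "'a \<Rightarrow> 'a \<Rightarrow> real"
  assumes "\<And>n x. psd n (\<lambda>i j. k (x i) (x j))"
  shows "pos_def_kernel (\<lambda>u v. complex_of_real (k u v))"
  unfolding pos_def_kernel_def Let_def
proof (intro allI impI conjI)
  fix n :: nat and x :: "nat \<Rightarrow> 'a" and z :: "nat \<Rightarrow> complex"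
  have P: "psd n (\<lambda>i j. k (x i) (x j))" by (rule assms)
  have sy: "\<And>i j. i < n \<Longrightarrow> j < n \<Longrightarrow> k (x i) (x j) = k (x j) (x i)" using psd_sym[OF P] by blast
  have "Im (\<Sum>i<n. \<Sum>j<n. cnj (z i) * complex_of_real (k (x i) (x j)) * z j) =
        (\<Sum>i<n. \<Sum>j<n. Re (z i) * k (x i) (x j) * Im (z j)) - (\<Sum>i<n. \<Sum>j<n. Im (z i) * k (x i) (x j) * Re (z j))"
    by (simp add: Im_sum algebra_simps sum_subtractf)
  also have "(\<Sum>i<n. \<Sum>j<n. Re (z i) * k (x i) (x j) * Im (z j)) = (\<Sum>j<n. \<Sum>i<n. Re (z i) * k (x i) (x j) * Im (z j))"
    by (rule sum.swap)
  also have "\<dots> = (\<Sum>i<n. \<Sum>j<n. Im (z i) * k (x i) (x j) * Re (z j))"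
    using sy by (intro sum.cong refl) (simp add: mult_ac)
  finally show "Im (\<Sum>i<n. \<Sum>j<n. cnj (z i) * complex_of_real (k (x i) (x j)) * z j) = 0" by simp
  have "Re (\<Sum>i<n. \<Sum>j<n. cnj (z i) * complex_of_real (k (x i) (x j)) * z j) =
        (\<Sum>i<n. \<Sum>j<n. Re (z i) * k (x i) (x j) * Re (z j)) + (\<Sum>i<n. \<Sum>j<n. Im (z i) * k (x i) (x j) * Im (z j))"
    by (simp add: Re_sum algebra_simps sum.distrib)
  also have "\<dots> \<ge> 0"
    by (intro add_nonneg_nonneg psd_Q[OF P])
  finally show "0 \<le> Re (\<Sum>i<n. \<Sum>j<n. cnj (z i) * complex_of_real (k (x i) (x j)) * z j)" .
qed

lemma exp_psd:
  fixes h :: "'a \<Rightarrow> 'a \<Rightarrow> real"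
  assumes "negative_type h" "t \<ge> 0"
  shows "psd n (\<lambda>i j. exp (- t * h (x i) (x j)))"
proof -
  define K where "K = (\<lambda>i j. t * (h (x i) (x 0) + h (x j) (x 0) - h (x i) (x j)))"
  have "psd n K" unfolding K_def by (intro psd_cmult neg_psd assms)
  then have "psd n (\<lambda>i j. exp (- t * h (x i) (x 0)) * exp (K i j) * exp (- t * h (x j) (x 0)))"
    by (intro psd_scale psd_exp)
  moreover have "\<And>i j. exp (- t * h (x i) (x 0)) * exp (K i j) * exp (- t * h (x j) (x 0)) = exp (- t * h (x i) (x j))"
    unfolding K_def by (simp add: exp_add[symmetric] algebra_simps)
  ultimately show ?thesis by simp
qed

lemma negtype_nonneg:
  fixes h :: "'a \<Rightarrow> 'a \<Rightarrow> real"
  assumes "negative_type h"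
  shows "h u v \<ge> 0"
proof -
  have hs: "h v u = h u v" and h0: "h u u = 0" "h v v = 0" using assms unfolding negative_type_def by auto
  define y where "y = (\<lambda>k::nat. if k = 0 then u else v)"
  define a where "a = (\<lambda>k::nat. if k = 0 then (1::real) else -1)"
  have "(\<Sum>i<(2::nat). \<Sum>j<2. a i * h (y i) (y j) * a j) \<le> 0"
    by (rule negtypeD[OF assms]) (simp_all add: numeral_2_eq_2 a_def)
  then show ?thesis using hs h0 by (simp add: numeral_2_eq_2 a_def y_def)
qed

lemma sup_norm_le: "(\<And>x y. norm (g x y) \<le> M) \<Longrightarrow> sup_norm g \<le> M"
  unfolding sup_norm_def by (rule cSUP_least) auto

lemma sup_norm_ge:
  assumes b: "\<And>x y. norm (g x y) \<le> M"
  shows "norm (g x y) \<le> sup_norm g"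
proof -
  have "bdd_above (range (\<lambda>p. norm (g (fst p) (snd p))))"
    by (rule bdd_aboveI2[where M=M]) (rule b)
  then show ?thesis unfolding sup_norm_def
    using cSUP_upper[of "(x, y)" UNIV "\<lambda>p. norm (g (fst p) (snd p))"] by simp
qed

lemma sup_norm_nonneg: "(\<And>x y. norm (g x y) \<le> M) \<Longrightarrow> 0 \<le> sup_norm g"
  using sup_norm_ge[of g M undefined undefined] by (meson norm_ge_zero order_trans)

lemma aux_div: "(P::real) \<noteq> 0 \<Longrightarrow> Q \<noteq> 0 \<Longrightarrow> e / (4 * P * Q) * Q * P = e / 4"
  by (simp add: field_simps)

lemma backward:
  fixes h :: "'a \<Rightarrow> 'a \<Rightarrow> real" and d :: "'a \<Rightarrow> 'a \<Rightarrow> real"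
  assumes nt: "negative_type h" and mp: "metrically_proper d h"
  shows "\<exists>F. pd_approx_unit d F"
proof -
  define U where "U = (\<lambda>t::real. \<lambda>x y. complex_of_real (exp (- t * h x y)))"
  define F where "F = filtermap U (at_right 0)"
  have hpos: "\<And>x y. h x y \<ge> 0" using negtype_nonneg[OF nt] by blast
  have mp1: "\<And>R. R > 0 \<Longrightarrow> \<exists>B. \<forall>x y. d x y \<le> R \<longrightarrow> norm (h x y) \<le> B"
    and mp2: "\<And>C. C > 0 \<Longrightarrow> \<exists>R>0. \<forall>x y. d x y > R \<longrightarrow> norm (h x y) > C"
    using mp unfolding metrically_proper_def by auto
  have Ub: "\<And>t x y. t \<ge> 0 \<Longrightarrow> norm (U t x y) \<le> 1"
    unfolding U_def using hpos by (simp add: mult_nonneg_nonneg)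
  have "F \<noteq> bot" unfolding F_def by (simp add: filtermap_bot_iff)
  moreover have "\<forall>\<^sub>F u in F. u \<in> C0_diag d \<and> pos_def_kernel u"
    unfolding F_def eventually_filtermap eventually_at_right_field
  proof (intro exI[of _ 1] conjI allI impI)
    fix t :: real assume t: "0 < t" "t < 1"
    show "pos_def_kernel (U t)"
      unfolding U_def by (rule pd_of_psd, rule exp_psd[OF nt]) (use t in simp)
    show "U t \<in> C0_diag d"
      unfolding C0_diag_def
    proof (intro CollectI conjI allI impI)
      show "\<exists>B. \<forall>x y. norm (U t x y) \<le> B" by (intro exI[of _ 1] allI Ub) (use t in simp)
      fix e :: real assume e: "e > 0"
      define C where "C = \<bar>ln e\<bar> / t + 1"
      have "C > 0" unfolding C_def using t by (simp add: add_nonneg_pos)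
      then obtain R where R: "R > 0" "\<And>x y. d x y > R \<Longrightarrow> norm (h x y) > C" using mp2 by blast
      show "\<exists>R>0. \<forall>x y. R < d x y \<longrightarrow> norm (U t x y) < e"
      proof (intro exI[of _ R] conjI allI impI)
        fix x y assume "R < d x y"
        then have "norm (h x y) > C" using R(2) by blast
        then have "h x y > C" using hpos[of x y] by simp
        then have "t * h x y > t * C" using t by simp
        also have "t * C = \<bar>ln e\<bar> + t" unfolding C_def using t by (simp add: field_simps)
        finally have lt: "\<bar>ln e\<bar> + t < t * h x y" .
        have "- ln e \<le> \<bar>ln e\<bar>" by simp
        then have "- t * h x y < ln e" using lt t by simp
        then have "exp (- t * h x y) < exp (ln e)" by simp
        then show "norm (U t x y) < e" unfolding U_def using e by simp
      qed (use R in simp)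
    qed
  qed simp
  moreover have "\<forall>f \<in> C0_diag d. ((\<lambda>u. sup_norm (\<lambda>x y. u x y * f x y - f x y)) \<longlongrightarrow> 0) F"
  proof
    fix f assume "f \<in> C0_diag d"
    then obtain B where B: "\<And>x y. norm (f x y) \<le> B"
      and dec: "\<And>e. e > 0 \<Longrightarrow> \<exists>R>0. \<forall>x y. d x y > R \<longrightarrow> norm (f x y) < e"
      unfolding C0_diag_def by blast
    show "((\<lambda>u. sup_norm (\<lambda>x y. u x y * f x y - f x y)) \<longlongrightarrow> 0) F"
      unfolding tendsto_iff F_def eventually_filtermap
    proof (intro allI impI)
      fix e :: real assume e: "e > 0"
      obtain R where R: "R > 0" "\<And>x y. d x y > R \<Longrightarrow> norm (f x y) < e / 4" using dec[of "e/4"] e by auto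
      obtain H where H: "\<And>x y. d x y \<le> R \<Longrightarrow> norm (h x y) \<le> H" using mp1[OF R(1)] by blast
      define b where "b = e / (4 * (\<bar>B\<bar> + 1) * (\<bar>H\<bar> + 1))"
      have b: "b > 0" unfolding b_def using e by (simp add: add_pos_nonneg)
      show "\<forall>\<^sub>F t in at_right 0. dist (sup_norm (\<lambda>x y. U t x y * f x y - f x y)) 0 < e"
        unfolding eventually_at_right_field
      proof (intro exI[of _ b] conjI allI impI)
        fix t :: real assume t: "0 < t" "t < b"
        have pt: "norm (U t x y * f x y - f x y) \<le> e / 4" for x y
        proof -
          have eq: "U t x y * f x y - f x y = complex_of_real (exp (- t * h x y) - 1) * f x y"
            unfolding U_def by (simp add: algebra_simps)
          have E1: "exp (- t * h x y) \<le> 1" using hpos[of x y] t by (simp add: mult_nonneg_nonneg)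
          have E2: "1 - exp (- t * h x y) \<le> t * h x y"
            using exp_ge_add_one_self[of "- t * h x y"] by simp
          have n: "norm (U t x y * f x y - f x y) = (1 - exp (- t * h x y)) * norm (f x y)"
            by (simp only: eq norm_mult norm_of_real) (use E1 in simp)
          show ?thesis
          proof (cases "d x y \<le> R")
            case True
            have "(1 - exp (- t * h x y)) * norm (f x y) \<le> (t * \<bar>H\<bar>) * \<bar>B\<bar>"
            proof (rule mult_mono)
              have "h x y \<le> \<bar>H\<bar>" using H[OF True] hpos[of x y] by simp
              then show "1 - exp (- t * h x y) \<le> t * \<bar>H\<bar>" using E2 t by (smt (verit) mult_left_mono)
              show "norm (f x y) \<le> \<bar>B\<bar>" using B[of x y] by simp
            qed (use t in auto)
            also have "\<dots> \<le> b * (\<bar>H\<bar> + 1) * (\<bar>B\<bar> + 1)"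
              using t by (intro mult_mono) auto
            also have "\<dots> = e / 4"
            proof -
              have "\<bar>B\<bar> + 1 \<noteq> 0" "\<bar>H\<bar> + 1 \<noteq> 0" by linarith+
              then show ?thesis unfolding b_def by (rule aux_div)
            qed
            finally show ?thesis using n by simp
          next
            case False
            have "(1 - exp (- t * h x y)) * norm (f x y) \<le> 1 * norm (f x y)"
              by (rule mult_right_mono) auto
            also have "\<dots> \<le> e / 4" using R(2)[of x y] False by simp
            finally show ?thesis using n by simp
          qed
        qed
        have "sup_norm (\<lambda>x y. U t x y * f x y - f x y) \<le> e / 4" by (rule sup_norm_le) (rule pt)
        moreover have "0 \<le> sup_norm (\<lambda>x y. U t x y * f x y - f x y)" by (rule sup_norm_nonneg) (rule pt)
        ultimately show "dist (sup_norm (\<lambda>x y. U t x y * f x y - f x y)) 0 < e"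
          using e by (simp add: dist_real_def)
      qed (use b in simp)
    qed
  qed
  ultimately show ?thesis unfolding pd_approx_unit_def by blast
qed

lemma pd_real:
  fixes u :: "'a \<Rightarrow> 'a \<Rightarrow> complex" and n :: nat and a :: "nat \<Rightarrow> real" and x :: "nat \<Rightarrow> 'a"
  assumes "pos_def_kernel u"
  shows "0 \<le> (\<Sum>i<n. \<Sum>j<n. a i * Re (u (x i) (x j)) * a j)"
proof (cases "n \<ge> 1")
  case True
  have P: "\<forall>n::nat. \<forall>x::nat\<Rightarrow>'a. \<forall>z::nat\<Rightarrow>complex. n \<ge> 1 \<longrightarrow>
     Im (\<Sum>i<n. \<Sum>j<n. cnj (z i) * u (x i) (x j) * z j) = 0 \<and> 0 \<le> Re (\<Sum>i<n. \<Sum>j<n. cnj (z i) * u (x i) (x j) * z j)"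
    using assms unfolding pos_def_kernel_def Let_def .
  have "0 \<le> Re (\<Sum>i<n. \<Sum>j<n. cnj (complex_of_real (a i)) * u (x i) (x j) * complex_of_real (a j))"
    using P[rule_format, of n "\<lambda>i. complex_of_real (a i)" x] True by simp
  also have "\<dots> = (\<Sum>i<n. \<Sum>j<n. a i * Re (u (x i) (x j)) * a j)"
    by (simp add: Re_sum)
  finally show ?thesis .
next
  case False then show ?thesis by simp
qed

definition hk :: "('a \<Rightarrow> 'a \<Rightarrow> complex) \<Rightarrow> 'a \<Rightarrow> 'a \<Rightarrow> real" where
  "hk u x y = Re (u x x) + Re (u y y) - Re (u x y) - Re (u y x)"

lemma hk_nonneg:
  assumes "pos_def_kernel u"
  shows "hk u x y \<ge> 0"
proof -
  define z where "z = (\<lambda>k::nat. if k = 0 then x else y)"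
  define a where "a = (\<lambda>k::nat. if k = 0 then (1::real) else -1)"
  have "0 \<le> (\<Sum>i<(2::nat). \<Sum>j<2. a i * Re (u (z i) (z j)) * a j)"
    by (rule pd_real[OF assms])
  then show ?thesis by (simp add: numeral_2_eq_2 a_def z_def hk_def)
qed

lemma hk_negtype:
  fixes a :: "nat \<Rightarrow> real"
  assumes "pos_def_kernel u" "(\<Sum>j<n. a j) = 0"
  shows "(\<Sum>i<n. \<Sum>j<n. a i * hk u (x i) (x j) * a j) \<le> 0"
proof -
  define Q where "Q = (\<Sum>i<n. \<Sum>j<n. a i * Re (u (x i) (x j)) * a j)"
  have Q0: "Q \<ge> 0" unfolding Q_def by (rule pd_real[OF assms(1)])
  have e1: "(\<Sum>i<n. \<Sum>j<n. (a i * Re (u (x i) (x i))) * a j) = 0"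
  proof -
    have "(\<Sum>i<n. \<Sum>j<n. (a i * Re (u (x i) (x i))) * a j) = (\<Sum>i<n. a i * Re (u (x i) (x i))) * (\<Sum>j<n. a j)"
      unfolding sum_product ..
    then show ?thesis using assms(2) by simp
  qed
  have e2: "(\<Sum>i<n. \<Sum>j<n. a i * (Re (u (x j) (x j)) * a j)) = 0"
  proof -
    have "(\<Sum>i<n. \<Sum>j<n. a i * (Re (u (x j) (x j)) * a j)) = (\<Sum>i<n. a i) * (\<Sum>j<n. Re (u (x j) (x j)) * a j)"
      unfolding sum_product ..
    then show ?thesis using assms(2) by simp
  qed
  have e3: "(\<Sum>i<n. \<Sum>j<n. a i * Re (u (x j) (x i)) * a j) = Q"
  proof -
    have "(\<Sum>i<n. \<Sum>j<n. a i * Re (u (x j) (x i)) * a j) = (\<Sum>j<n. \<Sum>i<n. a i * Re (u (x j) (x i)) * a j)"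
      by (rule sum.swap)
    also have "\<dots> = Q" unfolding Q_def by (intro sum.cong refl) (simp add: mult_ac)
    finally show ?thesis .
  qed
  have "(\<Sum>i<n. \<Sum>j<n. a i * hk u (x i) (x j) * a j) =
        (\<Sum>i<n. \<Sum>j<n. (a i * Re (u (x i) (x i))) * a j) + (\<Sum>i<n. \<Sum>j<n. a i * (Re (u (x j) (x j)) * a j))
        - Q - (\<Sum>i<n. \<Sum>j<n. a i * Re (u (x j) (x i)) * a j)"
    unfolding Q_def hk_def by (simp add: algebra_simps sum.distrib sum_subtractf)
  also have "\<dots> = - 2 * Q" using e1 e2 e3 by simp
  finally show ?thesis using Q0 by simp
qed

lemma approx_step:
  fixes d :: "'a \<Rightarrow> 'a \<Rightarrow> real"
  assumes pa: "pd_approx_unit d F" and R: "R \<ge> 0" and dl: "dl > 0"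
  shows "\<exists>u. u \<in> C0_diag d \<and> pos_def_kernel u \<and> (\<forall>x y. d x y \<le> R \<longrightarrow> norm (u x y - 1) < dl)"
proof -
  have nb: "F \<noteq> bot" and ev: "\<forall>\<^sub>F u in F. u \<in> C0_diag d \<and> pos_def_kernel u"
    and cv: "\<And>f. f \<in> C0_diag d \<Longrightarrow> ((\<lambda>u. sup_norm (\<lambda>x y. u x y * f x y - f x y)) \<longlongrightarrow> 0) F"
    using pa unfolding pd_approx_unit_def by auto
  define f where "f = (\<lambda>x y. if d x y \<le> R then (1::complex) else 0)"
  have fC: "f \<in> C0_diag d"
    unfolding C0_diag_def
  proof (intro CollectI conjI allI impI)
    show "\<exists>B. \<forall>x y. norm (f x y) \<le> B" by (intro exI[of _ 1]) (simp add: f_def)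
    fix e :: real assume "e > 0"
    then show "\<exists>R'>0. \<forall>x y. R' < d x y \<longrightarrow> norm (f x y) < e"
      by (intro exI[of _ "R + 1"]) (use R in \<open>auto simp: f_def\<close>)
  qed
  have "\<forall>\<^sub>F u in F. dist (sup_norm (\<lambda>x y. u x y * f x y - f x y)) 0 < dl"
    using cv[OF fC] dl unfolding tendsto_iff by blast
  with ev have "\<forall>\<^sub>F u in F. (u \<in> C0_diag d \<and> pos_def_kernel u) \<and> dist (sup_norm (\<lambda>x y. u x y * f x y - f x y)) 0 < dl"
    by (rule eventually_conj)
  then obtain u where u: "u \<in> C0_diag d" "pos_def_kernel u" "dist (sup_norm (\<lambda>x y. u x y * f x y - f x y)) 0 < dl"
    using eventually_happens'[OF nb] by blast
  obtain B where B: "\<And>x y. norm (u x y) \<le> B" using u(1) unfolding C0_diag_def by blast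
  have bd: "norm (u x y * f x y - f x y) \<le> B + 1" for x y
  proof -
    have B0: "0 \<le> B" using order_trans[OF norm_ge_zero B] .
    have "norm (u x y * f x y - f x y) \<le> norm (u x y * f x y) + norm (f x y)" by (rule norm_triangle_ineq4)
    also have "\<dots> \<le> B + 1" using B[of x y] B0 by (auto simp: f_def)
    finally show ?thesis .
  qed
  have "\<forall>x y. d x y \<le> R \<longrightarrow> norm (u x y - 1) < dl"
  proof (intro allI impI)
    fix x y assume "d x y \<le> R"
    then have "norm (u x y - 1) = norm (u x y * f x y - f x y)" by (simp add: f_def)
    also have "\<dots> \<le> sup_norm (\<lambda>x y. u x y * f x y - f x y)" by (rule sup_norm_ge) (rule bd)
    also have "\<dots> < dl" using u(3) sup_norm_nonneg[of "\<lambda>x y. u x y * f x y - f x y", OF bd] by (simp add: dist_real_def)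
    finally show "norm (u x y - 1) < dl" .
  qed
  then show ?thesis using u by blast
qed

lemma forward:
  fixes d :: "'a \<Rightarrow> 'a \<Rightarrow> real"
  assumes met: "Metric_space (UNIV::'a set) d" and pa: "pd_approx_unit d F"
  shows "\<exists>h :: 'a \<Rightarrow> 'a \<Rightarrow> real. negative_type h \<and> metrically_proper d h"
proof -
  have dcom: "\<And>x y. d x y = d y x" using Metric_space.commute[OF met] .
  have dzero: "\<And>x. d x x = 0" using Metric_space.zero[OF met] by simp
  define dl where "dl = (\<lambda>n::nat. (1/2::real)^n / 8)"
  have dlpos: "\<And>n. dl n > 0" unfolding dl_def by simp
  have dlsmall: "\<And>n. dl n \<le> 1/8" unfolding dl_def by (simp add: power_le_one)
  have "\<forall>n::nat. \<exists>u. u \<in> C0_diag d \<and> pos_def_kernel u \<and> (\<forall>x y. d x y \<le> real n \<longrightarrow> norm (u x y - 1) < dl n)"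
    using approx_step[OF pa _ dlpos] by simp
  then have "\<exists>U. \<forall>n::nat. U n \<in> C0_diag d \<and> pos_def_kernel (U n) \<and> (\<forall>x y. d x y \<le> real n \<longrightarrow> norm (U n x y - 1) < dl n)"
    by (rule choice)
  then obtain U where UC: "\<And>n. U n \<in> C0_diag d" and Upd: "\<And>n. pos_def_kernel (U n)"
    and Uclose: "\<And>n x y. d x y \<le> real n \<Longrightarrow> norm (U n x y - 1) < dl n"
    by blast
  have "\<forall>n. \<exists>B. \<forall>x y. norm (U n x y) \<le> B" using UC unfolding C0_diag_def by blast
  then have "\<exists>Bd. \<forall>n. \<forall>x y. norm (U n x y) \<le> Bd n" by (rule choice)
  then obtain Bd where Bd: "\<And>n x y. norm (U n x y) \<le> Bd n" by blast
  have "\<forall>n. \<exists>S. S > 0 \<and> (\<forall>x y. d x y > S \<longrightarrow> norm (U n x y) < 1/4)"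
  proof
    fix n
    have "\<forall>e>0. \<exists>R>0. \<forall>x y. d x y > R \<longrightarrow> norm (U n x y) < e" using UC[of n] unfolding C0_diag_def by blast
    moreover have "(1/4::real) > 0" by simp
    ultimately obtain R where "R > 0" "\<forall>x y. d x y > R \<longrightarrow> norm (U n x y) < 1/4" by blast
    then show "\<exists>S. S > 0 \<and> (\<forall>x y. d x y > S \<longrightarrow> norm (U n x y) < 1/4)" by blast
  qed
  then have "\<exists>S. \<forall>n. S n > 0 \<and> (\<forall>x y. d x y > S n \<longrightarrow> norm (U n x y) < 1/4)" by (rule choice)
  then obtain S where S: "\<And>n x y. d x y > S n \<Longrightarrow> norm (U n x y) < 1/4" by blast

  define hs where "hs = (\<lambda>n. hk (U n))"
  have hnn: "\<And>n x y. hs n x y \<ge> 0" unfolding hs_def by (rule hk_nonneg[OF Upd])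
  have hbd: "\<bar>hs n x y\<bar> \<le> 4 * Bd n" for n x y
  proof -
    have "\<And>a b. \<bar>Re (U n a b)\<bar> \<le> Bd n" using order_trans[OF abs_Re_le_cmod Bd] .
    from this[of x x] this[of y y] this[of x y] this[of y x] show ?thesis
      unfolding hs_def hk_def by linarith
  qed
  have hsmall: "\<bar>hs n x y\<bar> \<le> (1/2)^n" if "d x y \<le> real n" for n x y
  proof -
    have c: "\<bar>Re (U n a b) - 1\<bar> < dl n" if "d a b \<le> real n" for a b
    proof -
      have "\<bar>Re (U n a b - 1)\<bar> \<le> norm (U n a b - 1)" by (rule abs_Re_le_cmod)
      then show ?thesis using Uclose[OF that] by simp
    qed
    have "d y x \<le> real n" using that dcom by simp
    from c[of x x] c[of y y] c[of x y, OF that] c[OF this] dzero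
    have "\<bar>hs n x y\<bar> \<le> 4 * dl n" unfolding hs_def hk_def by fastforce
    also have "\<dots> \<le> (1/2)^n" unfolding dl_def by simp
    finally show ?thesis .
  qed
  have hbig: "hs n x y \<ge> 1" if "d x y > S n" for n x y
  proof -
    have c: "Re (U n a a) \<ge> 7/8" for a
    proof -
      have "\<bar>Re (U n a a - 1)\<bar> \<le> norm (U n a a - 1)" by (rule abs_Re_le_cmod)
      then have "\<bar>Re (U n a a) - 1\<bar> < dl n" using Uclose[of a a n] dzero by simp
      then show ?thesis using dlsmall[of n] by linarith
    qed
    have "d y x > S n" using that dcom by simp
    then have "Re (U n x y) < 1/4" "Re (U n y x) < 1/4"
      using S[OF that] S[OF \<open>d y x > S n\<close>] abs_Re_le_cmod[of "U n x y"] abs_Re_le_cmod[of "U n y x"] by linarith+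
    then show ?thesis using c[of x] c[of y] unfolding hs_def hk_def by linarith
  qed
  define c where "c = (\<lambda>(R::real) (n::nat). (if n < nat \<lceil>R\<rceil> then 4 * Bd n else 0) + (1/2::real)^n)"
  have cbound: "\<bar>hs n x y\<bar> \<le> c R n" if "d x y \<le> R" for R n x y
  proof (cases "n < nat \<lceil>R\<rceil>")
    case True
    have p: "(0::real) \<le> (1/2)^n" by simp
    have e: "c R n = 4 * Bd n + (1/2)^n" unfolding c_def using True by simp
    show ?thesis unfolding e using hbd[of n x y] p by linarith
  next
    case False
    have "nat \<lceil>R\<rceil> \<le> n" using False by (simp only: not_less)
    then have "real (nat \<lceil>R\<rceil>) \<le> real n" by (simp only: of_nat_le_iff)
    with real_nat_ceiling_ge[of R] have "R \<le> real n" by linarith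
    then have "d x y \<le> real n" using that by simp
    have "c R n = (1/2)^n" unfolding c_def by (simp only: if_not_P[OF False] add_0_left)
    then show ?thesis using hsmall[of x y n] \<open>d x y \<le> real n\<close> by simp
  qed
  have csum: "summable (c R)" for R
  proof (rule summable_comparison_test'[where N = "nat \<lceil>R\<rceil>"])
    show "summable (\<lambda>n. (1/2::real)^n)" by (rule summable_geometric) simp
    fix n assume "nat \<lceil>R\<rceil> \<le> n"
    then have nlt: "\<not> n < nat \<lceil>R\<rceil>" by (simp only: not_less)
    have "c R n = (1/2)^n" unfolding c_def by (simp only: if_not_P[OF nlt] add_0_left)
    then show "norm (c R n) \<le> (1/2)^n" by simp
  qed
  have habs: "summable (\<lambda>n. \<bar>hs n x y\<bar>)" for x y
    by (rule summable_comparison_test'[where N = 0, OF csum[of "d x y"]]) (simp add: cbound)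
  have hsum: "summable (\<lambda>n. hs n x y)" for x y
    by (rule summable_comparison_test'[where N = 0, OF csum[of "d x y"]]) (simp add: cbound)
  define h where "h = (\<lambda>x y. \<Sum>n. hs n x y)"
  have "negative_type h"
    unfolding negative_type_def
  proof (intro conjI allI impI)
    fix x show "h x x = 0" unfolding h_def hs_def hk_def by simp
  next
    fix x y show "h x y = h y x" unfolding h_def hs_def hk_def by (simp add: algebra_simps)
  next
    fix n :: nat and x :: "nat \<Rightarrow> 'a" and a :: "nat \<Rightarrow> real"
    assume "n \<ge> 1" "(\<Sum>j<n. a j) = 0"
    have s: "(\<lambda>m. \<Sum>i<n. \<Sum>j<n. a i * hs m (x i) (x j) * a j) sums (\<Sum>i<n. \<Sum>j<n. a i * h (x i) (x j) * a j)"
      unfolding h_def by (intro sums_sum sums_mult sums_mult2 summable_sums hsum)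
    have t: "(\<Sum>i<n. \<Sum>j<n. a i * hs m (x i) (x j) * a j) \<le> 0" for m
      unfolding hs_def by (rule hk_negtype[OF Upd \<open>(\<Sum>j<n. a j) = 0\<close>])
    show "(\<Sum>i<n. \<Sum>j<n. a i * h (x i) (x j) * a j) \<le> 0"
      by (rule sums_le[OF t s sums_zero])
  qed
  moreover have "metrically_proper d h"
    unfolding metrically_proper_def
  proof (intro conjI allI impI)
    fix R :: real assume "R > 0"
    show "\<exists>B. \<forall>x y. d x y \<le> R \<longrightarrow> norm (h x y) \<le> B"
    proof (intro exI[of _ "suminf (c R)"] allI impI)
      fix x y assume "d x y \<le> R"
      have "norm (h x y) = \<bar>\<Sum>n. hs n x y\<bar>" unfolding h_def by simp
      also have "\<dots> \<le> (\<Sum>n. \<bar>hs n x y\<bar>)" by (rule summable_rabs[OF habs])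
      also have "\<dots> \<le> suminf (c R)"
        by (rule suminf_le[OF _ habs csum]) (rule cbound[OF \<open>d x y \<le> R\<close>])
      finally show "norm (h x y) \<le> suminf (c R)" .
    qed
  next
    fix C :: real assume "C > 0"
    define M where "M = nat \<lceil>C\<rceil> + 1"
    define Rr where "Rr = 1 + (\<Sum>n<M. \<bar>S n\<bar>)"
    have Rr: "Rr > 0" unfolding Rr_def by (simp add: add_pos_nonneg sum_nonneg)
    show "\<exists>R>0. \<forall>x y. R < d x y \<longrightarrow> C < norm (h x y)"
    proof (intro exI[of _ Rr] conjI allI impI Rr)
      fix x y assume dxy: "Rr < d x y"
      have "\<And>n. n < M \<Longrightarrow> S n < d x y"
      proof -
        fix n assume "n < M"
        have "S n \<le> \<bar>S n\<bar>" by simp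
        also have "\<bar>S n\<bar> \<le> (\<Sum>n<M. \<bar>S n\<bar>)"
          by (rule member_le_sum) (use \<open>n < M\<close> in auto)
        finally show "S n < d x y" using dxy unfolding Rr_def by simp
      qed
      then have "\<And>n. n < M \<Longrightarrow> hs n x y \<ge> 1" using hbig by blast
      then have "(\<Sum>n<M. (1::real)) \<le> (\<Sum>n<M. hs n x y)" by (intro sum_mono) auto
      also have "\<dots> \<le> h x y" unfolding h_def
        by (rule sum_le_suminf[OF hsum]) (auto intro: hnn)
      finally have "real M \<le> h x y" by simp
      moreover have "C < real M" unfolding M_def using real_nat_ceiling_ge[of C] by simp
      ultimately show "C < norm (h x y)" by simp
    qed
  qed
  ultimately show ?thesis by blast
qed

theorem theorem2p1:
  fixes d :: "'a \<Rightarrow> 'a \<Rightarrow> real"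
  assumes "Metric_space (UNIV :: 'a set) d"
  shows "(\<exists>F. pd_approx_unit d F) \<longleftrightarrow>
         (\<exists>h :: 'a \<Rightarrow> 'a \<Rightarrow> real. negative_type h \<and> metrically_proper d h)"
proof
  assume "\<exists>F. pd_approx_unit d F"
  then obtain F where "pd_approx_unit d F" by blast
  then show "\<exists>h :: 'a \<Rightarrow> 'a \<Rightarrow> real. negative_type h \<and> metrically_proper d h"
    by (rule forward[OF assms])
next
  assume "\<exists>h :: 'a \<Rightarrow> 'a \<Rightarrow> real. negative_type h \<and> metrically_proper d h"
  then obtain h :: "'a \<Rightarrow> 'a \<Rightarrow> real" where "negative_type h" "metrically_proper d h" by blast
  then show "\<exists>F. pd_approx_unit d F" by (rule backward)
qed

end
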